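(* Let $G$ be a finite abelian group and $S\subseteq G$ nonempty, and let $SS^{-1}=\{st^{-1}:s,t\in S\}$. Then $\mathrm{sh}_G(SS^{-1})\le\frac{\#(SS^{-1})}{\#S}$.
   Context: Shape parameter: for a finite abelian group $G$ (written multiplicatively), $G^\vee=\mathrm{Hom}(G,\mathbb C^* )$ with trivial character $\chi_0$. For $f=\sum_{g\in G}c_g g\in\mathbb C[G]$ and $\chi\in G^\vee$ put $f_\chi=\sum_g c_g\chi(g^{-1})$. For $S\subseteq G$ let $\mathbb C[S]=\{\sum_{s\in S}c_ss\}\subseteq\mathbb C[G]$. The shape parameter is $\mathrm{sh}_G(S)=\frac{\#S}{\#G}\inf\left\{\frac{\sum_{\chi\in G^\vee}|f_\chi|}{|f_{\chi_0}|}: f\in\mathbb C[S],\ f_{\chi_0}\neq0\right\}$. *)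

theory Defs
  imports Complex_Main
begin

text \<open>A finite abelian group G is modelled as a finite type of class ab_group_add
  (written additively: g^{-1} becomes -g, st^{-1} becomes s - t); G = UNIV.\<close>

definition characters :: "('a::{ab_group_add,finite} \<Rightarrow> complex) set" where
  "characters = {\<chi>. (\<forall>x y. \<chi> (x + y) = \<chi> x * \<chi> y) \<and> (\<forall>x. \<chi> x \<noteq> 0)}"

text \<open>An element f of C[G] is represented by its coefficient function c; f_chi.\<close>
definition fourier_coeff :: "('a::{ab_group_add,finite} \<Rightarrow> complex) \<Rightarrow> ('a \<Rightarrow> complex) \<Rightarrow> complex" where
  "fourier_coeff c \<chi> = (\<Sum>g\<in>UNIV. c g * \<chi> (- g))"

definition shape_param :: "'a::{ab_group_add,finite} set \<Rightarrow> real" where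
  "shape_param S = (real (card S) / real (card (UNIV :: 'a set))) *
     Inf {(\<Sum>\<chi>\<in>characters. cmod (fourier_coeff c \<chi>)) / cmod (fourier_coeff c (\<lambda>_. 1)) | c.
           (\<forall>g. g \<notin> S \<longrightarrow> c g = 0) \<and> fourier_coeff c (\<lambda>_. 1) \<noteq> 0}"

definition diff_set :: "'a::ab_group_add set \<Rightarrow> 'a set" where
  "diff_set S = {s - t | s t. s \<in> S \<and> t \<in> S}"

end

theory Submission imports Defs begin

lemma cs_sum:
  fixes a :: "'b \<Rightarrow> real"
  assumes "finite S"
  shows "(\<Sum>x\<in>S. a x)^2 \<le> real (card S) * (\<Sum>x\<in>S. (a x)^2)"
proof -
  have "0 \<le> (\<Sum>x\<in>S. \<Sum>y\<in>S. (a x - a y)^2)" by (intro sum_nonneg) auto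
  also have "\<dots> = (\<Sum>x\<in>S. \<Sum>y\<in>S. (a x)^2 + (a y)^2 - 2 * (a x * a y))"
    by (simp add: power2_eq_square algebra_simps)
  also have "\<dots> = 2 * (real (card S) * (\<Sum>x\<in>S. (a x)^2)) - 2 * (\<Sum>x\<in>S. a x)^2"
    by (simp add: sum.distrib sum_subtractf sum_distrib_left sum_distrib_right power2_eq_square
        algebra_simps)
  finally show ?thesis by simp
qed

lemma char_mult: "\<chi> \<in> characters \<Longrightarrow> \<chi> (x + y) = \<chi> x * \<chi> y"
  by (simp add: characters_def)
lemma char_nz: "\<chi> \<in> characters \<Longrightarrow> \<chi> x \<noteq> 0"
  by (simp add: characters_def)

lemma char_zero: "\<chi> \<in> characters \<Longrightarrow> \<chi> 0 = 1"
proof -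
  assume c: "\<chi> \<in> characters"
  have "\<chi> 0 = \<chi> 0 * \<chi> 0" using char_mult[OF c, of 0 0] by simp
  thus ?thesis using char_nz[OF c, of 0] by simp
qed

lemma char_neg: "\<chi> \<in> characters \<Longrightarrow> \<chi> (-x) * \<chi> x = 1"
  using char_mult[of \<chi> "-x" x] char_zero[of \<chi>] by simp

lemma char_norm: "(\<chi> :: 'a::{ab_group_add,finite} \<Rightarrow> complex) \<in> characters \<Longrightarrow> cmod (\<chi> s) = 1"
proof -
  assume c: "\<chi> \<in> characters"
  have "(\<Prod>x\<in>UNIV. \<chi> x) = (\<Prod>x\<in>UNIV. \<chi> (x + s))"
    by (rule prod.reindex_bij_witness[of _ "\<lambda>x. x + s" "\<lambda>x. x - s"]) auto
  also have "\<dots> = (\<Prod>x\<in>UNIV. \<chi> x * \<chi> s)" using char_mult[OF c] by simp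
  also have "\<dots> = (\<Prod>x\<in>UNIV. \<chi> x) * \<chi> s ^ card (UNIV :: 'a set)" by (simp add: prod.distrib)
  finally have "\<chi> s ^ card (UNIV :: 'a set) = 1" using char_nz[OF c]
    by (metis (no_types, lifting) finite_UNIV mult_cancel_left1 prod_zero_iff)
  hence "cmod (\<chi> s) ^ card (UNIV :: 'a set) = 1" by (metis norm_one norm_power)
  moreover have "card (UNIV :: 'a set) > 0" by (simp add: card_gt_0_iff)
  ultimately show ?thesis using power_eq_iff_eq_base[of "card (UNIV :: 'a set)" "cmod (\<chi> s)" 1] by simp
qed

lemma char_cnj: "(\<chi> :: 'a::{ab_group_add,finite} \<Rightarrow> complex) \<in> characters \<Longrightarrow> \<chi> (-x) = cnj (\<chi> x)"
proof -
  assume c: "\<chi> \<in> characters"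
  have "\<chi> x * cnj (\<chi> x) = 1" using char_norm[OF c, of x]
    by (simp add: complex_norm_square[symmetric])
  thus ?thesis using char_neg[OF c, of x]
    by (metis mult.commute mult_cancel_right char_nz[OF c])
qed


lemma char_orth:
  fixes \<chi> \<psi> :: "'a::{ab_group_add,finite} \<Rightarrow> complex"
  assumes c: "\<chi> \<in> characters" and p: "\<psi> \<in> characters"
  shows "(\<Sum>g\<in>UNIV. \<chi> g * cnj (\<psi> g)) = (if \<chi> = \<psi> then of_nat (card (UNIV :: 'a set)) else 0)"
proof (cases "\<chi> = \<psi>")
  case True
  have "\<chi> g * cnj (\<chi> g) = 1" for g using char_norm[OF c, of g]
    by (simp add: complex_norm_square[symmetric])
  thus ?thesis using True by simp
next
  case False
  define \<phi> where "\<phi> g = \<chi> g * cnj (\<psi> g)" for g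
  have phm: "\<phi> (x + y) = \<phi> x * \<phi> y" for x y
    unfolding \<phi>_def using char_mult[OF c] char_mult[OF p] by simp
  obtain a where a: "\<chi> a \<noteq> \<psi> a" using False by blast
  have "\<phi> a \<noteq> 1"
  proof
    assume "\<phi> a = 1"
    hence "\<chi> a * \<psi> (-a) * \<psi> a = \<psi> a" unfolding \<phi>_def char_cnj[OF p] by simp
    thus False using a char_neg[OF p, of a] by (simp add: mult.assoc)
  qed
  have "(\<Sum>g\<in>UNIV. \<phi> g) = (\<Sum>g\<in>UNIV. \<phi> (g + a))"
    by (rule sum.reindex_bij_witness[of _ "\<lambda>x. x + a" "\<lambda>x. x - a"]) auto
  also have "\<dots> = \<phi> a * (\<Sum>g\<in>UNIV. \<phi> g)" by (simp add: phm sum_distrib_left mult.commute)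
  finally have "(\<Sum>g\<in>UNIV. \<phi> g) = 0" using \<open>\<phi> a \<noteq> 1\<close>
    by (metis mult_cancel_right1)
  thus ?thesis using False unfolding \<phi>_def by simp
qed

lemma bessel:
  fixes X :: "('a::{ab_group_add,finite} \<Rightarrow> complex) set" and S :: "'a set"
  assumes X: "finite X" "X \<subseteq> characters"
  shows "(\<Sum>\<chi>\<in>X. (cmod (\<Sum>s\<in>S. \<chi> (-s)))^2) \<le> real (card (UNIV :: 'a set)) * real (card S)"
proof -
  define A where "A \<chi> = (\<Sum>s\<in>S. \<chi> (-s))" for \<chi> :: "'a \<Rightarrow> complex"
  define B where "B = (\<Sum>\<chi>\<in>X. (cmod (A \<chi>))^2)"
  define w where "w g = (\<Sum>\<chi>\<in>X. A \<chi> * \<chi> g)" for g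
  have Acnj: "A \<chi> = (\<Sum>s\<in>S. cnj (\<chi> s))" if "\<chi> \<in> X" for \<chi>
    unfolding A_def using char_cnj X(2) that by (intro sum.cong) auto
  have B0: "B \<ge> 0" unfolding B_def by (intro sum_nonneg) auto
  have "(\<Sum>g\<in>S. cnj (w g)) = (\<Sum>\<chi>\<in>X. cnj (A \<chi>) * (\<Sum>g\<in>S. cnj (\<chi> g)))"
    unfolding w_def by (simp add: sum_distrib_left sum.swap[of _ S])
  also have "\<dots> = (\<Sum>\<chi>\<in>X. of_real ((cmod (A \<chi>))^2))"
  proof (intro sum.cong refl)
    fix \<chi> assume "\<chi> \<in> X"
    hence "(\<Sum>g\<in>S. cnj (\<chi> g)) = A \<chi>" using Acnj by simp
    thus "cnj (A \<chi>) * (\<Sum>g\<in>S. cnj (\<chi> g)) = of_real ((cmod (A \<chi>))^2)"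
      by (metis complex_norm_square mult.commute)
  qed
  also have "\<dots> = of_real B" unfolding B_def by simp
  finally have e1: "(\<Sum>g\<in>S. cnj (w g)) = of_real B" .
  have "B = cmod (\<Sum>g\<in>S. cnj (w g))" using e1 B0 by simp
  also have "\<dots> \<le> (\<Sum>g\<in>S. cmod (w g))" by (rule order_trans[OF norm_sum]) simp
  finally have B1: "B \<le> (\<Sum>g\<in>S. cmod (w g))" .
  have "(\<Sum>g\<in>UNIV. w g * cnj (w g)) =
      (\<Sum>g\<in>UNIV. \<Sum>\<chi>\<in>X. \<Sum>\<psi>\<in>X. A \<chi> * cnj (A \<psi>) * (\<chi> g * cnj (\<psi> g)))"
    unfolding w_def by (simp add: sum_distrib_left sum_distrib_right algebra_simps)
      (subst sum.swap, simp)
  also have "\<dots> = (\<Sum>\<chi>\<in>X. \<Sum>\<psi>\<in>X. A \<chi> * cnj (A \<psi>) * (\<Sum>g\<in>UNIV. \<chi> g * cnj (\<psi> g)))"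
    by (simp add: sum_distrib_left sum.swap[of _ UNIV])
  also have "\<dots> = (\<Sum>\<chi>\<in>X. \<Sum>\<psi>\<in>X. if \<chi> = \<psi> then A \<chi> * cnj (A \<chi>) * of_nat (card (UNIV :: 'a set)) else 0)"
    using X(2) by (intro sum.cong refl) (auto simp: char_orth subset_iff)
  also have "\<dots> = (\<Sum>\<chi>\<in>X. A \<chi> * cnj (A \<chi>) * of_nat (card (UNIV :: 'a set)))"
    using X(1) by (simp add: sum.delta)
  also have "\<dots> = of_real (real (card (UNIV :: 'a set)) * B)"
    unfolding B_def by (simp add: complex_norm_square sum_distrib_left mult.commute)
      (intro sum.cong refl, metis complex_norm_square of_real_power)
  finally have e2: "(\<Sum>g\<in>UNIV. (cmod (w g))^2) = real (card (UNIV :: 'a set)) * B"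
    by (metis (no_types, lifting) complex_norm_square of_real_eq_iff of_real_sum sum.cong)
  have "B^2 \<le> (\<Sum>g\<in>S. cmod (w g))^2" using B1 B0 by (simp add: power_mono)
  also have "\<dots> \<le> real (card S) * (\<Sum>g\<in>S. (cmod (w g))^2)" by (rule cs_sum) simp
  also have "\<dots> \<le> real (card S) * (\<Sum>g\<in>UNIV. (cmod (w g))^2)"
    by (intro mult_left_mono sum_mono2) auto
  also have "\<dots> = real (card S) * real (card (UNIV :: 'a set)) * B" using e2 by simp
  finally have "B * B \<le> (real (card S) * real (card (UNIV :: 'a set))) * B" by (simp add: power2_eq_square)
  hence "B \<le> real (card S) * real (card (UNIV :: 'a set))" using B0
    by (cases "B = 0") (auto simp: mult_le_cancel_right)
  thus ?thesis unfolding B_def A_def by (simp add: mult.commute)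
qed


lemma fourier_conv:
  fixes S :: "'a::{ab_group_add,finite} set" and \<chi> :: "'a \<Rightarrow> complex"
  assumes m: "\<And>x y. \<chi> (x + y) = \<chi> x * \<chi> y"
  shows "fourier_coeff (\<lambda>g. of_nat (card {p \<in> S \<times> S. fst p - snd p = g})) \<chi>
         = (\<Sum>s\<in>S. \<chi> (-s)) * (\<Sum>t\<in>S. \<chi> t)"
proof -
  have "fourier_coeff (\<lambda>g. of_nat (card {p \<in> S \<times> S. fst p - snd p = g})) \<chi>
      = (\<Sum>g\<in>UNIV. \<Sum>p\<in>{p \<in> S \<times> S. fst p - snd p = g}. \<chi> (- (fst p - snd p)))"
    unfolding fourier_coeff_def by (intro sum.cong refl) simp
  also have "\<dots> = (\<Sum>p\<in>S \<times> S. \<chi> (- (fst p - snd p)))"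
    by (rule sum.group) auto
  also have "\<dots> = (\<Sum>s\<in>S. \<Sum>t\<in>S. \<chi> (-s) * \<chi> t)"
  proof -
    have "(\<Sum>p\<in>S \<times> S. \<chi> (- (fst p - snd p))) = (\<Sum>s\<in>S. \<Sum>t\<in>S. \<chi> (- (s - t)))"
      by (simp add: sum.cartesian_product case_prod_beta)
    also have "\<dots> = (\<Sum>s\<in>S. \<Sum>t\<in>S. \<chi> (- s) * \<chi> t)"
      by (intro sum.cong refl) (metis m minus_diff_eq diff_conv_add_uminus add.commute)
    finally show ?thesis .
  qed
  also have "\<dots> = (\<Sum>s\<in>S. \<chi> (-s)) * (\<Sum>t\<in>S. \<chi> t)"
    by (simp add: sum_product)
  finally show ?thesis .
qed

theorem lemma3p3:
  fixes S :: "'a::{ab_group_add,finite} set"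
  assumes "S \<noteq> {}"
  shows "shape_param (diff_set S) \<le> real (card (diff_set S)) / real (card S)"
proof -
  define n where "n = card (UNIV :: 'a set)"
  define c where "c g = (of_nat (card {p \<in> S \<times> S. fst p - snd p = g}) :: complex)" for g
  define A where "A \<chi> = (\<Sum>s\<in>S. \<chi> (-s))" for \<chi> :: "'a \<Rightarrow> complex"
  have cS: "card S > 0" using assms by (simp add: card_gt_0_iff)
  have n0: "n > 0" unfolding n_def by (simp add: card_gt_0_iff)
  have f0: "fourier_coeff c (\<lambda>_. 1) = of_nat (card S * card S)"
    unfolding c_def using fourier_conv[of "\<lambda>_. 1" S] by simp
  have f0': "cmod (fourier_coeff c (\<lambda>_. 1)) = real (card S) * real (card S)"
    unfolding f0 by (metis norm_of_nat of_nat_mult)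
  have fch: "cmod (fourier_coeff c \<chi>) = (cmod (A \<chi>))^2" if "\<chi> \<in> characters" for \<chi>
  proof -
    have "(\<Sum>t\<in>S. \<chi> t) = cnj (A \<chi>)" unfolding A_def using char_cnj[OF that] by simp
    hence "fourier_coeff c \<chi> = A \<chi> * cnj (A \<chi>)"
      unfolding c_def A_def using fourier_conv[of \<chi> S] char_mult[OF that] by simp
    thus ?thesis by (simp add: norm_mult power2_eq_square)
  qed
  define r where "r = (\<Sum>\<chi>\<in>characters. cmod (fourier_coeff c \<chi>)) / cmod (fourier_coeff c (\<lambda>_. 1))"
  have supp: "\<forall>g. g \<notin> diff_set S \<longrightarrow> c g = 0"
  proof (intro allI impI)
    fix g assume "g \<notin> diff_set S"
    hence "{p \<in> S \<times> S. fst p - snd p = g} = {}" unfolding diff_set_def by auto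
    thus "c g = 0" unfolding c_def by simp
  qed
  have rin: "r \<in> {(\<Sum>\<chi>\<in>characters. cmod (fourier_coeff c \<chi>)) / cmod (fourier_coeff c (\<lambda>_. 1)) | c.
           (\<forall>g. g \<notin> diff_set S \<longrightarrow> c g = 0) \<and> fourier_coeff c (\<lambda>_. 1) \<noteq> 0}"
    unfolding r_def using supp f0 cS by (intro CollectI exI[of _ c]) auto
  have bdd: "bdd_below {(\<Sum>\<chi>\<in>characters. cmod (fourier_coeff c \<chi>)) / cmod (fourier_coeff c (\<lambda>_. 1)) | c.
           (\<forall>g. g \<notin> diff_set S \<longrightarrow> c g = 0) \<and> fourier_coeff c (\<lambda>_. 1) \<noteq> 0}"
    by (rule bdd_belowI[of _ 0]) (auto intro!: divide_nonneg_nonneg sum_nonneg)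
  have num: "(\<Sum>\<chi>\<in>characters. cmod (fourier_coeff c \<chi>)) \<le> real n * real (card S)"
  proof (cases "finite (characters :: ('a \<Rightarrow> complex) set)")
    case True
    have "(\<Sum>\<chi>\<in>characters. cmod (fourier_coeff c \<chi>)) = (\<Sum>\<chi>\<in>characters. (cmod (A \<chi>))^2)"
      using fch by (intro sum.cong) auto
    also have "\<dots> \<le> real n * real (card S)" unfolding A_def n_def
      by (rule bessel[OF True]) simp
    finally show ?thesis .
  next
    case False thus ?thesis by simp
  qed
  have "r \<le> real n * real (card S) / (real (card S) * real (card S))"
    unfolding r_def f0' using num cS by (intro divide_right_mono) auto
  also have "\<dots> = real n / real (card S)" using cS by simp
  finally have rle: "r \<le> real n / real (card S)" .
  have "shape_param (diff_set S) \<le> real (card (diff_set S)) / real n * r"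
    unfolding shape_param_def n_def[symmetric]
    by (intro mult_left_mono cInf_lower[OF rin bdd]) auto
  also have "\<dots> \<le> real (card (diff_set S)) / real n * (real n / real (card S))"
    by (intro mult_left_mono rle) auto
  also have "\<dots> = real (card (diff_set S)) / real (card S)" using n0 by simp
  finally show ?thesis .
qed

end
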